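(* Let $\mathcal{A},\mathcal{A}'$ be abelian categories with amplitudes $\alpha,\alpha'$, and let $F\colon\mathcal{A}\to\mathcal{A}'$ be an exact functor such that $\alpha'(F(A))\le K\alpha(A)$ for all $A\in\operatorname{ob}\mathcal{A}$, for some $K\ge0$. Then $\mathrm{d}_{\alpha'}(F(A),F(B))\le K\,\mathrm{d}_\alpha(A,B)$ for all $A,B\in\operatorname{ob}\mathcal{A}$.
   Context: An amplitude on an abelian category $\mathcal{A}$ is a function $\alpha\colon\operatorname{ob}\mathcal{A}\to[0,\infty]$ with $\alpha(0)=0$ such that for every short exact sequence $0\to A\to B\to C\to0$, $\alpha(A)\le\alpha(B)$, $\alpha(C)\le\alpha(B)$ and $\alpha(B)\le\alpha(A)+\alpha(C)$. The path metric $\mathrm{d}_\alpha(A,B)$ is the infimum, over zigzags $A\xleftarrow{\gamma_1}C_1\xrightarrow{\gamma_2}\cdots\xrightarrow{\gamma_n}B$, of $\sum_i\alpha(\ker\gamma_i)+\alpha(\operatorname{coker}\gamma_i)$ ($\inf\emptyset=\infty$). *)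

theory Defs
  imports "HOL-Library.Extended_Nonnegative_Real"
begin

record ('o, 'm) cat =
  cOb   :: "'o set"
  cAr   :: "'m set"
  cDom  :: "'m \<Rightarrow> 'o"
  cCod  :: "'m \<Rightarrow> 'o"
  cId   :: "'o \<Rightarrow> 'm"
  cComp :: "'m \<Rightarrow> 'm \<Rightarrow> 'm"   (* cComp C g f  =  g \<circ> f *)

definition hom :: "('o,'m) cat \<Rightarrow> 'o \<Rightarrow> 'o \<Rightarrow> 'm set" where
  "hom C a b = {f \<in> cAr C. cDom C f = a \<and> cCod C f = b}"

definition category :: "('o,'m) cat \<Rightarrow> bool" where
  "category C \<longleftrightarrow>
     (\<forall>f\<in>cAr C. cDom C f \<in> cOb C \<and> cCod C f \<in> cOb C) \<and>
     (\<forall>a\<in>cOb C. cId C a \<in> hom C a a) \<and>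
     (\<forall>f\<in>cAr C. \<forall>g\<in>cAr C. cCod C f = cDom C g \<longrightarrow>
         cComp C g f \<in> hom C (cDom C f) (cCod C g)) \<and>
     (\<forall>f\<in>cAr C. cComp C (cId C (cCod C f)) f = f \<and> cComp C f (cId C (cDom C f)) = f) \<and>
     (\<forall>f\<in>cAr C. \<forall>g\<in>cAr C. \<forall>h\<in>cAr C. cCod C f = cDom C g \<and> cCod C g = cDom C h \<longrightarrow>
         cComp C h (cComp C g f) = cComp C (cComp C h g) f)"

definition zero_obj :: "('o,'m) cat \<Rightarrow> 'o \<Rightarrow> bool" where
  "zero_obj C z \<longleftrightarrow> z \<in> cOb C \<and>
     (\<forall>a\<in>cOb C. (\<exists>!f. f \<in> hom C a z) \<and> (\<exists>!f. f \<in> hom C z a))"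

definition zero_arr :: "('o,'m) cat \<Rightarrow> 'm \<Rightarrow> bool" where
  "zero_arr C f \<longleftrightarrow> f \<in> cAr C \<and>
     (\<exists>z. zero_obj C z \<and> (\<exists>g\<in>hom C (cDom C f) z. \<exists>h\<in>hom C z (cCod C f). f = cComp C h g))"

definition mono :: "('o,'m) cat \<Rightarrow> 'm \<Rightarrow> bool" where
  "mono C f \<longleftrightarrow> f \<in> cAr C \<and>
     (\<forall>g\<in>cAr C. \<forall>h\<in>cAr C. cCod C g = cDom C f \<and> cCod C h = cDom C f \<and> cDom C g = cDom C h \<and>
        cComp C f g = cComp C f h \<longrightarrow> g = h)"

definition epi :: "('o,'m) cat \<Rightarrow> 'm \<Rightarrow> bool" where
  "epi C f \<longleftrightarrow> f \<in> cAr C \<and>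
     (\<forall>g\<in>cAr C. \<forall>h\<in>cAr C. cDom C g = cCod C f \<and> cDom C h = cCod C f \<and> cCod C g = cCod C h \<and>
        cComp C g f = cComp C h f \<longrightarrow> g = h)"

definition is_kernel :: "('o,'m) cat \<Rightarrow> 'm \<Rightarrow> 'm \<Rightarrow> bool" where
  "is_kernel C k f \<longleftrightarrow> f \<in> cAr C \<and> k \<in> cAr C \<and> cCod C k = cDom C f \<and>
     zero_arr C (cComp C f k) \<and>
     (\<forall>x\<in>cAr C. cCod C x = cDom C f \<and> zero_arr C (cComp C f x) \<longrightarrow>
        (\<exists>!u. u \<in> hom C (cDom C x) (cDom C k) \<and> cComp C k u = x))"

definition is_cokernel :: "('o,'m) cat \<Rightarrow> 'm \<Rightarrow> 'm \<Rightarrow> bool" where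
  "is_cokernel C c f \<longleftrightarrow> f \<in> cAr C \<and> c \<in> cAr C \<and> cDom C c = cCod C f \<and>
     zero_arr C (cComp C c f) \<and>
     (\<forall>x\<in>cAr C. cDom C x = cCod C f \<and> zero_arr C (cComp C x f) \<longrightarrow>
        (\<exists>!u. u \<in> hom C (cCod C c) (cCod C x) \<and> cComp C u c = x))"

definition has_binary_products :: "('o,'m) cat \<Rightarrow> bool" where
  "has_binary_products C \<longleftrightarrow> (\<forall>a\<in>cOb C. \<forall>b\<in>cOb C. \<exists>p\<in>cOb C. \<exists>p1\<in>hom C p a. \<exists>p2\<in>hom C p b.
     \<forall>x\<in>cOb C. \<forall>f\<in>hom C x a. \<forall>g\<in>hom C x b.
       \<exists>!u. u \<in> hom C x p \<and> cComp C p1 u = f \<and> cComp C p2 u = g)"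

definition has_binary_coproducts :: "('o,'m) cat \<Rightarrow> bool" where
  "has_binary_coproducts C \<longleftrightarrow> (\<forall>a\<in>cOb C. \<forall>b\<in>cOb C. \<exists>s\<in>cOb C. \<exists>i1\<in>hom C a s. \<exists>i2\<in>hom C b s.
     \<forall>x\<in>cOb C. \<forall>f\<in>hom C a x. \<forall>g\<in>hom C b x.
       \<exists>!u. u \<in> hom C s x \<and> cComp C u i1 = f \<and> cComp C u i2 = g)"

text \<open>Abelian category (Freyd's characterisation): zero object, binary products and
  coproducts, kernels and cokernels, every mono is a kernel and every epi is a cokernel.\<close>
definition abelian :: "('o,'m) cat \<Rightarrow> bool" where
  "abelian C \<longleftrightarrow> category C \<and> (\<exists>z. zero_obj C z) \<and>
     has_binary_products C \<and> has_binary_coproducts C \<and>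
     (\<forall>f\<in>cAr C. \<exists>k. is_kernel C k f) \<and> (\<forall>f\<in>cAr C. \<exists>c. is_cokernel C c f) \<and>
     (\<forall>f. mono C f \<longrightarrow> (\<exists>g. is_kernel C f g)) \<and>
     (\<forall>f. epi C f \<longrightarrow> (\<exists>g. is_cokernel C f g))"

definition ses :: "('o,'m) cat \<Rightarrow> 'm \<Rightarrow> 'm \<Rightarrow> bool" where
  "ses C f g \<longleftrightarrow> is_kernel C f g \<and> is_cokernel C g f"

definition amplitude :: "('o,'m) cat \<Rightarrow> ('o \<Rightarrow> ennreal) \<Rightarrow> bool" where
  "amplitude C \<alpha> \<longleftrightarrow> (\<forall>z. zero_obj C z \<longrightarrow> \<alpha> z = 0) \<and>
     (\<forall>f g. ses C f g \<longrightarrow>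
        \<alpha> (cDom C f) \<le> \<alpha> (cDom C g) \<and> \<alpha> (cCod C g) \<le> \<alpha> (cDom C g) \<and>
        \<alpha> (cDom C g) \<le> \<alpha> (cDom C f) + \<alpha> (cCod C g))"

text \<open>amplitude of ker and coker of an arrow (well defined up to iso; a chosen
  kernel / cokernel is used)\<close>
definition arr_cost :: "('o,'m) cat \<Rightarrow> ('o \<Rightarrow> ennreal) \<Rightarrow> 'm \<Rightarrow> ennreal" where
  "arr_cost C \<alpha> \<gamma> = \<alpha> (cDom C (SOME k. is_kernel C k \<gamma>)) + \<alpha> (cCod C (SOME c. is_cokernel C c \<gamma>))"

definition is_zigzag :: "('o,'m) cat \<Rightarrow> 'o \<Rightarrow> 'o \<Rightarrow> 'o list \<Rightarrow> 'm list \<Rightarrow> bool" where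
  "is_zigzag C A B xs gs \<longleftrightarrow> length xs = Suc (length gs) \<and> xs ! 0 = A \<and> xs ! length gs = B \<and>
     (\<forall>i<length gs. gs ! i \<in> cAr C \<and>
        ((cDom C (gs ! i) = xs ! i \<and> cCod C (gs ! i) = xs ! Suc i) \<or>
         (cDom C (gs ! i) = xs ! Suc i \<and> cCod C (gs ! i) = xs ! i)))"

definition path_dist :: "('o,'m) cat \<Rightarrow> ('o \<Rightarrow> ennreal) \<Rightarrow> 'o \<Rightarrow> 'o \<Rightarrow> ennreal" where
  "path_dist C \<alpha> A B = (INF gs \<in> {gs. \<exists>xs. is_zigzag C A B xs gs}. sum_list (map (arr_cost C \<alpha>) gs))"

definition is_functor :: "('o,'m) cat \<Rightarrow> ('p,'n) cat \<Rightarrow> ('o \<Rightarrow> 'p) \<Rightarrow> ('m \<Rightarrow> 'n) \<Rightarrow> bool" where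
  "is_functor C D Fo Fm \<longleftrightarrow>
     (\<forall>a\<in>cOb C. Fo a \<in> cOb D \<and> Fm (cId C a) = cId D (Fo a)) \<and>
     (\<forall>f\<in>cAr C. Fm f \<in> hom D (Fo (cDom C f)) (Fo (cCod C f))) \<and>
     (\<forall>f\<in>cAr C. \<forall>g\<in>cAr C. cCod C f = cDom C g \<longrightarrow> Fm (cComp C g f) = cComp D (Fm g) (Fm f))"

definition exact_functor :: "('o,'m) cat \<Rightarrow> ('p,'n) cat \<Rightarrow> ('o \<Rightarrow> 'p) \<Rightarrow> ('m \<Rightarrow> 'n) \<Rightarrow> bool" where
  "exact_functor C D Fo Fm \<longleftrightarrow> is_functor C D Fo Fm \<and>
     (\<forall>f g. ses C f g \<longrightarrow> ses D (Fm f) (Fm g))"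

end

theory Submission
  imports Defs
begin

locale acat =
  fixes C :: "('o,'m) cat"
  assumes ab: "abelian C"
begin

lemma cat: "category C" using ab unfolding abelian_def by blast

lemma ar_dom: "f \<in> cAr C \<Longrightarrow> cDom C f \<in> cOb C"
  using cat unfolding category_def by blast
lemma ar_cod: "f \<in> cAr C \<Longrightarrow> cCod C f \<in> cOb C"
  using cat unfolding category_def by blast
lemma id_ar: "a \<in> cOb C \<Longrightarrow> cId C a \<in> cAr C \<and> cDom C (cId C a) = a \<and> cCod C (cId C a) = a"
  using cat unfolding category_def hom_def by blast
lemma comp_ar: "f \<in> cAr C \<Longrightarrow> g \<in> cAr C \<Longrightarrow> cCod C f = cDom C g \<Longrightarrow>
   cComp C g f \<in> cAr C \<and> cDom C (cComp C g f) = cDom C f \<and> cCod C (cComp C g f) = cCod C g"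
  using cat unfolding category_def hom_def by blast
lemma id_l: "f \<in> cAr C \<Longrightarrow> cComp C (cId C (cCod C f)) f = f"
  using cat unfolding category_def by blast
lemma id_r: "f \<in> cAr C \<Longrightarrow> cComp C f (cId C (cDom C f)) = f"
  using cat unfolding category_def by blast
lemma assoc: "f \<in> cAr C \<Longrightarrow> g \<in> cAr C \<Longrightarrow> h \<in> cAr C \<Longrightarrow> cCod C f = cDom C g \<Longrightarrow> cCod C g = cDom C h \<Longrightarrow>
   cComp C h (cComp C g f) = cComp C (cComp C h g) f"
  using cat unfolding category_def by blast

lemma zex: "\<exists>z. zero_obj C z" using ab unfolding abelian_def by blast

lemma zob: "zero_obj C z \<Longrightarrow> z \<in> cOb C" unfolding zero_obj_def by blast

lemma to_zero: "zero_obj C z \<Longrightarrow> a \<in> cOb C \<Longrightarrow> \<exists>f. f \<in> cAr C \<and> cDom C f = a \<and> cCod C f = z"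
  unfolding zero_obj_def hom_def by blast
lemma from_zero: "zero_obj C z \<Longrightarrow> a \<in> cOb C \<Longrightarrow> \<exists>f. f \<in> cAr C \<and> cDom C f = z \<and> cCod C f = a"
  unfolding zero_obj_def hom_def by blast
lemma to_zero_uniq: "zero_obj C z \<Longrightarrow> f \<in> cAr C \<Longrightarrow> g \<in> cAr C \<Longrightarrow> cDom C f = cDom C g \<Longrightarrow>
   cCod C f = z \<Longrightarrow> cCod C g = z \<Longrightarrow> f = g"
  unfolding zero_obj_def hom_def using ar_dom by (metis (mono_tags, lifting) mem_Collect_eq)
lemma from_zero_uniq: "zero_obj C z \<Longrightarrow> f \<in> cAr C \<Longrightarrow> g \<in> cAr C \<Longrightarrow> cCod C f = cCod C g \<Longrightarrow>
   cDom C f = z \<Longrightarrow> cDom C g = z \<Longrightarrow> f = g"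
  unfolding zero_obj_def hom_def using ar_cod by (metis (mono_tags, lifting) mem_Collect_eq)

lemma zero_arr_E:
  assumes "zero_arr C f"
  obtains z g h where "zero_obj C z" "g \<in> cAr C" "h \<in> cAr C" "cDom C g = cDom C f" "cCod C g = z"
    "cDom C h = z" "cCod C h = cCod C f" "f = cComp C h g"
  using assms unfolding zero_arr_def hom_def by blast

lemma zero_arr_I:
  assumes "zero_obj C z" "g \<in> cAr C" "h \<in> cAr C" "cCod C g = z" "cDom C h = z"
  shows "zero_arr C (cComp C h g)"
  using assms comp_ar unfolding zero_arr_def hom_def by auto

lemma zero_arr_ar: "zero_arr C f \<Longrightarrow> f \<in> cAr C" unfolding zero_arr_def by blast

lemma zero_arr_eq:
  assumes "zero_arr C f" "zero_arr C f'" "cDom C f = cDom C f'" "cCod C f = cCod C f'"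
  shows "f = f'"
proof -
  obtain z g h where a: "zero_obj C z" "g \<in> cAr C" "h \<in> cAr C" "cDom C g = cDom C f" "cCod C g = z"
    "cDom C h = z" "cCod C h = cCod C f" "f = cComp C h g" using assms(1) by (rule zero_arr_E)
  obtain z' g' h' where b: "zero_obj C z'" "g' \<in> cAr C" "h' \<in> cAr C" "cDom C g' = cDom C f'" "cCod C g' = z'"
    "cDom C h' = z'" "cCod C h' = cCod C f'" "f' = cComp C h' g'" using assms(2) by (rule zero_arr_E)
  obtain i where i: "i \<in> cAr C" "cDom C i = z" "cCod C i = z'" using to_zero[OF b(1) zob[OF a(1)]] by blast
  have 1: "g' = cComp C i g"
    by (rule to_zero_uniq[OF b(1)]) (use a b i assms comp_ar in auto)
  have 2: "h = cComp C h' i"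
    by (rule from_zero_uniq[OF a(1)]) (use a b i assms comp_ar in auto)
  show ?thesis using a b i 1 2 assoc by simp
qed

lemma zero_comp_left:
  assumes "zero_arr C f" "g \<in> cAr C" "cCod C f = cDom C g"
  shows "zero_arr C (cComp C g f)"
proof -
  obtain z g0 h where a: "zero_obj C z" "g0 \<in> cAr C" "h \<in> cAr C" "cDom C g0 = cDom C f" "cCod C g0 = z"
    "cDom C h = z" "cCod C h = cCod C f" "f = cComp C h g0" using assms(1) by (rule zero_arr_E)
  have gh: "cComp C g h \<in> cAr C" "cDom C (cComp C g h) = z" using comp_ar[OF a(3) assms(2)] a assms by auto
  have "cComp C g f = cComp C (cComp C g h) g0" using assoc[OF a(2) a(3) assms(2)] a assms by simp
  then show ?thesis using zero_arr_I[OF a(1) a(2) gh(1) a(5) gh(2)] by simp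
qed

lemma zero_comp_right:
  assumes "zero_arr C f" "g \<in> cAr C" "cCod C g = cDom C f"
  shows "zero_arr C (cComp C f g)"
proof -
  obtain z g0 h where a: "zero_obj C z" "g0 \<in> cAr C" "h \<in> cAr C" "cDom C g0 = cDom C f" "cCod C g0 = z"
    "cDom C h = z" "cCod C h = cCod C f" "f = cComp C h g0" using assms(1) by (rule zero_arr_E)
  have gh: "cComp C g0 g \<in> cAr C" "cCod C (cComp C g0 g) = z" using comp_ar[OF assms(2) a(2)] a assms by auto
  have "cComp C f g = cComp C h (cComp C g0 g)" using assoc[OF assms(2) a(2) a(3)] a assms by simp
  then show ?thesis using zero_arr_I[OF a(1) gh(1) a(3) gh(2) a(6)] by simp
qed

lemma zero_exists:
  assumes "a \<in> cOb C" "b \<in> cOb C"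
  shows "\<exists>f. zero_arr C f \<and> cDom C f = a \<and> cCod C f = b"
proof -
  obtain z where z: "zero_obj C z" using zex by blast
  obtain g where g: "g \<in> cAr C" "cDom C g = a" "cCod C g = z" using to_zero[OF z assms(1)] by blast
  obtain h where h: "h \<in> cAr C" "cDom C h = z" "cCod C h = b" using from_zero[OF z assms(2)] by blast
  show ?thesis using zero_arr_I[OF z g(1) h(1)] g h comp_ar by auto
qed

lemma zero_arr_dom_cod: "zero_arr C f \<Longrightarrow> cDom C f \<in> cOb C \<and> cCod C f \<in> cOb C"
  using zero_arr_ar ar_dom ar_cod by blast

lemma mono_cancel:
  assumes "mono C m" "g \<in> cAr C" "h \<in> cAr C" "cCod C g = cDom C m" "cCod C h = cDom C m"
    "cDom C g = cDom C h" "cComp C m g = cComp C m h"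
  shows "g = h"
  using assms unfolding mono_def by blast

lemma epi_cancel:
  assumes "epi C e" "g \<in> cAr C" "h \<in> cAr C" "cDom C g = cCod C e" "cDom C h = cCod C e"
    "cCod C g = cCod C h" "cComp C g e = cComp C h e"
  shows "g = h"
  using assms unfolding epi_def by blast

lemma mono_zero:
  assumes "mono C m" "y \<in> cAr C" "cCod C y = cDom C m" "zero_arr C (cComp C m y)"
  shows "zero_arr C y"
proof -
  have m: "m \<in> cAr C" using assms(1) unfolding mono_def by blast
  obtain y0 where y0: "zero_arr C y0" "cDom C y0 = cDom C y" "cCod C y0 = cCod C y"
    using zero_exists[OF ar_dom[OF assms(2)] ar_cod[OF assms(2)]] by blast
  have y0a: "y0 \<in> cAr C" using zero_arr_ar[OF y0(1)] .
  have z: "zero_arr C (cComp C m y0)" using zero_comp_left[OF y0(1) m] y0 assms by simp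
  have c1: "cDom C (cComp C m y0) = cDom C (cComp C m y)" "cCod C (cComp C m y0) = cCod C (cComp C m y)"
    using comp_ar[OF y0a m] comp_ar[OF assms(2) m] y0 assms by auto
  have "cComp C m y0 = cComp C m y"
    using zero_arr_eq[OF z assms(4) c1] .
  then have "y0 = y" using mono_cancel[OF assms(1) y0a assms(2)] assms(3) y0(2,3) by simp
  then show ?thesis using y0 by simp
qed

lemma epi_zero:
  assumes "epi C e" "y \<in> cAr C" "cDom C y = cCod C e" "zero_arr C (cComp C y e)"
  shows "zero_arr C y"
proof -
  have m: "e \<in> cAr C" using assms(1) unfolding epi_def by blast
  obtain y0 where y0: "zero_arr C y0" "cDom C y0 = cDom C y" "cCod C y0 = cCod C y"
    using zero_exists[OF ar_dom[OF assms(2)] ar_cod[OF assms(2)]] by blast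
  have y0a: "y0 \<in> cAr C" using zero_arr_ar[OF y0(1)] .
  have z: "zero_arr C (cComp C y0 e)" using zero_comp_right[OF y0(1) m] y0 assms by simp
  have c1: "cDom C (cComp C y0 e) = cDom C (cComp C y e)" "cCod C (cComp C y0 e) = cCod C (cComp C y e)"
    using comp_ar[OF m y0a] comp_ar[OF m assms(2)] y0 assms by auto
  have "cComp C y0 e = cComp C y e"
    using zero_arr_eq[OF z assms(4) c1] .
  then have "y0 = y" using epi_cancel[OF assms(1) y0a assms(2)] assms(3) y0(2,3) by simp
  then show ?thesis using y0 by simp
qed

lemma kernel_facts: "is_kernel C k f \<Longrightarrow> k \<in> cAr C \<and> f \<in> cAr C \<and> cCod C k = cDom C f \<and> zero_arr C (cComp C f k)"
  unfolding is_kernel_def by blast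

lemma kernel_univ1:
  assumes "is_kernel C k f" "x \<in> cAr C" "cCod C x = cDom C f" "zero_arr C (cComp C f x)"
  shows "\<exists>!u. u \<in> hom C (cDom C x) (cDom C k) \<and> cComp C k u = x"
  using assms unfolding is_kernel_def by blast

lemma kernel_univ:
  assumes "is_kernel C k f" "x \<in> cAr C" "cCod C x = cDom C f" "zero_arr C (cComp C f x)"
  shows "\<exists>u. u \<in> cAr C \<and> cDom C u = cDom C x \<and> cCod C u = cDom C k \<and> cComp C k u = x"
  using kernel_univ1[OF assms] unfolding hom_def by blast

lemma cokernel_facts: "is_cokernel C c f \<Longrightarrow> c \<in> cAr C \<and> f \<in> cAr C \<and> cDom C c = cCod C f \<and> zero_arr C (cComp C c f)"
  unfolding is_cokernel_def by blast

lemma cokernel_univ1: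
  assumes "is_cokernel C c f" "x \<in> cAr C" "cDom C x = cCod C f" "zero_arr C (cComp C x f)"
  shows "\<exists>!u. u \<in> hom C (cCod C c) (cCod C x) \<and> cComp C u c = x"
  using assms unfolding is_cokernel_def by blast

lemma cokernel_univ:
  assumes "is_cokernel C c f" "x \<in> cAr C" "cDom C x = cCod C f" "zero_arr C (cComp C x f)"
  shows "\<exists>u. u \<in> cAr C \<and> cDom C u = cCod C c \<and> cCod C u = cCod C x \<and> cComp C u c = x"
  using cokernel_univ1[OF assms] unfolding hom_def by blast

lemma kernel_mono: assumes "is_kernel C k f" shows "mono C k"
  unfolding mono_def
proof (intro conjI ballI impI)
  show "k \<in> cAr C" using assms unfolding is_kernel_def by blast
next
  fix g h assume gh: "g \<in> cAr C" "h \<in> cAr C"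
    "cCod C g = cDom C k \<and> cCod C h = cDom C k \<and> cDom C g = cDom C h \<and> cComp C k g = cComp C k h"
  have k: "k \<in> cAr C" "f \<in> cAr C" "cCod C k = cDom C f" "zero_arr C (cComp C f k)"
    using kernel_facts[OF assms] by auto
  let ?x = "cComp C k g"
  have x: "?x \<in> cAr C" "cCod C ?x = cDom C f" "cDom C ?x = cDom C g" using comp_ar[OF gh(1) k(1)] k gh by auto
  have "cComp C f ?x = cComp C (cComp C f k) g"
    using assoc[OF gh(1) k(1) k(2)] gh k by simp
  moreover have "zero_arr C (cComp C (cComp C f k) g)"
    using zero_comp_right[OF k(4) gh(1)] comp_ar[OF k(1) k(2)] gh k by simp
  ultimately have "zero_arr C (cComp C f ?x)" by simp
  then have "\<exists>!u. u \<in> hom C (cDom C ?x) (cDom C k) \<and> cComp C k u = ?x"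
    using kernel_univ1[OF assms x(1) x(2)] by blast
  moreover have "g \<in> hom C (cDom C ?x) (cDom C k)" "h \<in> hom C (cDom C ?x) (cDom C k)"
    using gh x unfolding hom_def by auto
  ultimately show "g = h" using gh by metis
qed

lemma cokernel_epi: assumes "is_cokernel C c f" shows "epi C c"
  unfolding epi_def
proof (intro conjI ballI impI)
  show "c \<in> cAr C" using assms unfolding is_cokernel_def by blast
next
  fix g h assume gh: "g \<in> cAr C" "h \<in> cAr C"
    "cDom C g = cCod C c \<and> cDom C h = cCod C c \<and> cCod C g = cCod C h \<and> cComp C g c = cComp C h c"
  have k: "c \<in> cAr C" "f \<in> cAr C" "cDom C c = cCod C f" "zero_arr C (cComp C c f)"
    using cokernel_facts[OF assms] by auto
  let ?x = "cComp C g c"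
  have x: "?x \<in> cAr C" "cDom C ?x = cCod C f" "cCod C ?x = cCod C g" using comp_ar[OF k(1) gh(1)] k gh by auto
  have "cComp C ?x f = cComp C g (cComp C c f)"
    using assoc[OF k(2) k(1) gh(1)] gh k by simp
  moreover have "zero_arr C (cComp C g (cComp C c f))"
    using zero_comp_left[OF k(4) gh(1)] comp_ar[OF k(2) k(1)] gh k by simp
  ultimately have "zero_arr C (cComp C ?x f)" by simp
  then have "\<exists>!u. u \<in> hom C (cCod C c) (cCod C ?x) \<and> cComp C u c = ?x"
    using cokernel_univ1[OF assms x(1) x(2)] by blast
  moreover have "g \<in> hom C (cCod C c) (cCod C ?x)" "h \<in> hom C (cCod C c) (cCod C ?x)"
    using gh x unfolding hom_def by auto
  ultimately show "g = h" using gh by metis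
qed

lemma mono_comp:
  assumes "mono C a" "mono C b" "cCod C a = cDom C b"
  shows "mono C (cComp C b a)"
proof -
  have a: "a \<in> cAr C" and b: "b \<in> cAr C" using assms unfolding mono_def by auto
  have ba: "cComp C b a \<in> cAr C" "cDom C (cComp C b a) = cDom C a" "cCod C (cComp C b a) = cCod C b"
    using comp_ar[OF a b assms(3)] by auto
  show ?thesis unfolding mono_def
  proof (intro conjI ballI impI)
    show "cComp C b a \<in> cAr C" using ba by simp
  next
    fix g h assume gh: "g \<in> cAr C" "h \<in> cAr C"
      "cCod C g = cDom C (cComp C b a) \<and> cCod C h = cDom C (cComp C b a) \<and> cDom C g = cDom C h \<and>
       cComp C (cComp C b a) g = cComp C (cComp C b a) h"
    have g1: "cComp C a g \<in> cAr C" "cCod C (cComp C a g) = cDom C b" "cDom C (cComp C a g) = cDom C g"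
      using comp_ar[OF gh(1) a] gh ba assms by auto
    have h1: "cComp C a h \<in> cAr C" "cCod C (cComp C a h) = cDom C b" "cDom C (cComp C a h) = cDom C h"
      using comp_ar[OF gh(2) a] gh ba assms by auto
    have "cComp C b (cComp C a g) = cComp C b (cComp C a h)"
      using assoc[OF gh(1) a b] assoc[OF gh(2) a b] gh ba assms by simp
    then have "cComp C a g = cComp C a h"
      using mono_cancel[OF assms(2) g1(1) h1(1) g1(2) h1(2)] g1 h1 gh by simp
    then show "g = h" using mono_cancel[OF assms(1) gh(1) gh(2)] gh ba by simp
  qed
qed

end

context acat begin

lemma comp_in: "f \<in> cAr C \<Longrightarrow> g \<in> cAr C \<Longrightarrow> cCod C f = cDom C g \<Longrightarrow> cComp C g f \<in> cAr C"
  using comp_ar by blast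
lemma comp_dom: "f \<in> cAr C \<Longrightarrow> g \<in> cAr C \<Longrightarrow> cCod C f = cDom C g \<Longrightarrow> cDom C (cComp C g f) = cDom C f"
  using comp_ar by blast
lemma comp_cod: "f \<in> cAr C \<Longrightarrow> g \<in> cAr C \<Longrightarrow> cCod C f = cDom C g \<Longrightarrow> cCod C (cComp C g f) = cCod C g"
  using comp_ar by blast

lemmas cs = comp_in comp_dom comp_cod

lemma ab_kernel: "f \<in> cAr C \<Longrightarrow> \<exists>k. is_kernel C k f" using ab unfolding abelian_def by blast
lemma ab_cokernel: "f \<in> cAr C \<Longrightarrow> \<exists>k. is_cokernel C k f" using ab unfolding abelian_def by blast
lemma ab_mono: "mono C f \<Longrightarrow> \<exists>g. is_kernel C f g" using ab unfolding abelian_def by blast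
lemma ab_epi: "epi C f \<Longrightarrow> \<exists>g. is_cokernel C f g" using ab unfolding abelian_def by blast

lemma product:
  assumes "a \<in> cOb C" "b \<in> cOb C"
  obtains p p1 p2 where "p \<in> cOb C" "p1 \<in> cAr C" "cDom C p1 = p" "cCod C p1 = a"
    "p2 \<in> cAr C" "cDom C p2 = p" "cCod C p2 = b"
    "\<And>x f g. x \<in> cOb C \<Longrightarrow> f \<in> cAr C \<Longrightarrow> cDom C f = x \<Longrightarrow> cCod C f = a \<Longrightarrow>
       g \<in> cAr C \<Longrightarrow> cDom C g = x \<Longrightarrow> cCod C g = b \<Longrightarrow>
       \<exists>!u. u \<in> hom C x p \<and> cComp C p1 u = f \<and> cComp C p2 u = g"
proof -
  have "has_binary_products C" using ab unfolding abelian_def by blast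
  then obtain p p1 p2 where "p \<in> cOb C" "p1 \<in> hom C p a" "p2 \<in> hom C p b"
     "\<forall>x\<in>cOb C. \<forall>f\<in>hom C x a. \<forall>g\<in>hom C x b.
       \<exists>!u. u \<in> hom C x p \<and> cComp C p1 u = f \<and> cComp C p2 u = g"
    using assms unfolding has_binary_products_def by blast
  then show ?thesis using that unfolding hom_def by auto
qed

lemma image_epi:
  assumes f: "f \<in> cAr C" and c: "is_cokernel C c f" and m: "is_kernel C m c"
    and e: "e \<in> cAr C" "cDom C e = cDom C f" "cCod C e = cDom C m" "f = cComp C m e"
  shows "epi C e"
  unfolding epi_def
proof (intro conjI ballI impI)
  show "e \<in> cAr C" by fact
next
  fix u v assume uv0: "u \<in> cAr C" "v \<in> cAr C"
    "cDom C u = cCod C e \<and> cDom C v = cCod C e \<and> cCod C u = cCod C v \<and> cComp C u e = cComp C v e"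
  define I where "I = cDom C m"
  define Z where "Z = cCod C u"
  have mf: "m \<in> cAr C" "c \<in> cAr C" "cCod C m = cDom C c" "zero_arr C (cComp C c m)"
    using kernel_facts[OF m] by auto
  have cf: "cDom C c = cCod C f" "zero_arr C (cComp C c f)" using cokernel_facts[OF c] by auto
  have uv: "cDom C u = I" "cDom C v = I" "cCod C v = Z" "cCod C u = Z" "cComp C u e = cComp C v e"
    using uv0 e unfolding I_def Z_def by auto
  have ZO: "Z \<in> cOb C" using ar_cod[OF uv0(1)] Z_def by simp
  have IO: "I \<in> cOb C" using ar_dom[OF mf(1)] I_def by simp
  obtain P p1 p2 where P: "P \<in> cOb C" "p1 \<in> cAr C" "cDom C p1 = P" "cCod C p1 = Z"
    "p2 \<in> cAr C" "cDom C p2 = P" "cCod C p2 = Z"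
    and Pu: "\<And>x f g. x \<in> cOb C \<Longrightarrow> f \<in> cAr C \<Longrightarrow> cDom C f = x \<Longrightarrow> cCod C f = Z \<Longrightarrow>
       g \<in> cAr C \<Longrightarrow> cDom C g = x \<Longrightarrow> cCod C g = Z \<Longrightarrow>
       \<exists>!u. u \<in> hom C x P \<and> cComp C p1 u = f \<and> cComp C p2 u = g"
    using product[OF ZO ZO] by blast
  have idZ: "cId C Z \<in> cAr C" "cDom C (cId C Z) = Z" "cCod C (cId C Z) = Z" using id_ar[OF ZO] by auto
  obtain d where d: "d \<in> cAr C" "cDom C d = Z" "cCod C d = P" "cComp C p1 d = cId C Z" "cComp C p2 d = cId C Z"
    using Pu[OF ZO idZ idZ] unfolding hom_def by blast
  have dmono: "mono C d" unfolding mono_def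
  proof (intro conjI ballI impI)
    show "d \<in> cAr C" by fact
  next
    fix g h assume gh: "g \<in> cAr C" "h \<in> cAr C"
      "cCod C g = cDom C d \<and> cCod C h = cDom C d \<and> cDom C g = cDom C h \<and> cComp C d g = cComp C d h"
    have "g = cComp C (cComp C p1 d) g" using id_l[OF gh(1)] gh d by simp
    also have "\<dots> = cComp C p1 (cComp C d g)" using assoc[OF gh(1) d(1) P(2)] gh d P by simp
    also have "\<dots> = cComp C p1 (cComp C d h)" using gh by simp
    also have "\<dots> = cComp C (cComp C p1 d) h" using assoc[OF gh(2) d(1) P(2)] gh d P by simp
    also have "\<dots> = h" using id_l[OF gh(2)] gh d by simp
    finally show "g = h" .
  qed
  obtain q where q: "is_kernel C d q" using ab_mono[OF dmono] by blast
  have qf: "q \<in> cAr C" "cDom C q = P" "zero_arr C (cComp C q d)" using kernel_facts[OF q] d by auto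
  obtain w where w: "w \<in> cAr C" "cDom C w = I" "cCod C w = P" "cComp C p1 w = u" "cComp C p2 w = v"
    using Pu[OF IO uv0(1) uv(1) uv(4) uv0(2) uv(2) uv(3)] unfolding hom_def by blast
  have qw: "cComp C q w \<in> cAr C" "cDom C (cComp C q w) = I"
    using cs[OF w(1) qf(1)] w qf by auto
  obtain g where g: "is_kernel C g (cComp C q w)" using ab_kernel[OF qw(1)] by blast
  have gf: "g \<in> cAr C" "cCod C g = I" "zero_arr C (cComp C (cComp C q w) g)"
    using kernel_facts[OF g] qw by auto
  have "zero_arr C (cComp C q (cComp C w g))"
    using gf assoc[OF gf(1) w(1) qf(1)] w qf by simp
  then obtain t where t: "t \<in> cAr C" "cComp C d t = cComp C w g" "cCod C t = Z"
    using kernel_univ[OF q, of "cComp C w g"] cs[OF gf(1) w(1)] gf w qf d by auto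
  have ug: "cComp C u g = t"
  proof -
    have "cComp C u g = cComp C (cComp C p1 w) g" using w by simp
    also have "\<dots> = cComp C p1 (cComp C w g)" using assoc[OF gf(1) w(1) P(2)] gf w P by simp
    also have "\<dots> = cComp C p1 (cComp C d t)" using t by simp
    also have "\<dots> = cComp C (cComp C p1 d) t" using assoc[OF t(1) d(1) P(2)] t d P cs[OF gf(1) w(1)] gf w by auto
    also have "\<dots> = t" using id_l[OF t(1)] d t by simp
    finally show ?thesis .
  qed
  have vg: "cComp C v g = t"
  proof -
    have "cComp C v g = cComp C (cComp C p2 w) g" using w by simp
    also have "\<dots> = cComp C p2 (cComp C w g)" using assoc[OF gf(1) w(1) P(5)] gf w P by simp
    also have "\<dots> = cComp C p2 (cComp C d t)" using t by simp
    also have "\<dots> = cComp C (cComp C p2 d) t" using assoc[OF t(1) d(1) P(5)] t d P cs[OF gf(1) w(1)] gf w by auto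
    also have "\<dots> = t" using id_l[OF t(1)] d t by simp
    finally show ?thesis .
  qed
  \<comment> \<open>e factors through g\<close>
  have ue: "cComp C u e \<in> cAr C" "cDom C (cComp C u e) = cDom C e" "cCod C (cComp C u e) = Z"
    using cs[OF e(1) uv0(1)] uv e I_def by auto
  have we: "cComp C w e = cComp C d (cComp C u e)"
  proof -
    have EO: "cDom C e \<in> cOb C" using ar_dom[OF e(1)] .
    have A1: "cComp C w e \<in> hom C (cDom C e) P" "cComp C p1 (cComp C w e) = cComp C u e"
      "cComp C p2 (cComp C w e) = cComp C u e"
      using cs[OF e(1) w(1)] assoc[OF e(1) w(1) P(2)] assoc[OF e(1) w(1) P(5)] w e uv P I_def
      unfolding hom_def by auto
    have A2: "cComp C d (cComp C u e) \<in> hom C (cDom C e) P"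
      "cComp C p1 (cComp C d (cComp C u e)) = cComp C u e"
      "cComp C p2 (cComp C d (cComp C u e)) = cComp C u e"
      using cs[OF ue(1) d(1)] assoc[OF ue(1) d(1) P(2)] assoc[OF ue(1) d(1) P(5)] ue d P
        id_l[OF ue(1)] unfolding hom_def by auto
    show ?thesis using Pu[OF EO ue(1) ue(2) ue(3) ue(1) ue(2) ue(3)] A1 A2 by blast
  qed
  have "zero_arr C (cComp C (cComp C q w) e)"
  proof -
    have "cComp C (cComp C q w) e = cComp C q (cComp C w e)"
      using assoc[OF e(1) w(1) qf(1)] e w qf I_def by simp
    also have "\<dots> = cComp C (cComp C q d) (cComp C u e)"
      using we assoc[OF ue(1) d(1) qf(1)] ue d qf by simp
    finally show ?thesis using zero_comp_right[OF qf(3) ue(1)] ue d qf cs[OF d(1) qf(1)] by simp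
  qed
  then obtain e' where e': "e' \<in> cAr C" "cCod C e' = cDom C g" "cComp C g e' = e" "cDom C e' = cDom C e"
    using kernel_univ[OF g e(1)] e qw I_def by auto
  have mg: "mono C (cComp C m g)"
    using mono_comp[OF kernel_mono[OF g] kernel_mono[OF m]] gf I_def by simp
  have mga: "cComp C m g \<in> cAr C" "cDom C (cComp C m g) = cDom C g" "cCod C (cComp C m g) = cCod C m"
    using cs[OF gf(1) mf(1)] gf I_def by auto
  obtain h where h: "is_kernel C (cComp C m g) h" using ab_mono[OF mg] by blast
  have hf: "h \<in> cAr C" "cDom C h = cCod C m" "zero_arr C (cComp C h (cComp C m g))"
    using kernel_facts[OF h] mga by auto
  have fcod: "cCod C f = cCod C m" using e cs[OF e(1) mf(1)] I_def by simp
  have "cComp C h f = cComp C (cComp C h (cComp C m g)) e'"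
  proof -
    have "f = cComp C (cComp C m g) e'" using e e' assoc[OF e'(1) gf(1) mf(1)] gf I_def by simp
    then show ?thesis using assoc[OF e'(1) mga(1) hf(1)] e' mga hf by simp
  qed
  then have "zero_arr C (cComp C h f)"
    using zero_comp_right[OF hf(3) e'(1)] e' mga cs[OF mga(1) hf(1)] hf by simp
  then obtain h' where h': "h' \<in> cAr C" "cDom C h' = cCod C c" "cComp C h' c = h"
    using cokernel_univ[OF c hf(1)] hf fcod by auto
  have "cComp C h m = cComp C h' (cComp C c m)"
    using h' assoc[OF mf(1) mf(2) h'(1)] mf h' by auto
  then have "zero_arr C (cComp C h m)"
    using zero_comp_left[OF mf(4) h'(1)] cs[OF mf(1) mf(2)] mf h' by simp
  then obtain s where s: "s \<in> cAr C" "cDom C s = cDom C m" "cCod C s = cDom C g"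
    "cComp C (cComp C m g) s = m"
    using kernel_univ[OF h mf(1)] hf mga by auto
  have gs: "cComp C g s = cId C I"
  proof -
    have "cComp C m (cComp C g s) = cComp C m (cId C I)"
      using s assoc[OF s(1) gf(1) mf(1)] id_r[OF mf(1)] gf I_def by simp
    then show ?thesis
      using mono_cancel[OF kernel_mono[OF m], of "cComp C g s" "cId C I"] cs[OF s(1) gf(1)] s gf id_ar[OF IO]
        I_def by simp
  qed
  have "u = cComp C u (cComp C g s)" using gs id_r[OF uv0(1)] uv by simp
  also have "\<dots> = cComp C (cComp C u g) s" using assoc[OF s(1) gf(1) uv0(1)] s gf uv by simp
  also have "\<dots> = cComp C (cComp C v g) s" using ug vg by simp
  also have "\<dots> = cComp C v (cComp C g s)" using assoc[OF s(1) gf(1) uv0(2)] s gf uv by simp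
  also have "\<dots> = v" using gs id_r[OF uv0(2)] uv by simp
  finally show "u = v" .
qed

lemma factor:
  assumes f: "f \<in> cAr C" and k: "is_kernel C k f" and c: "is_cokernel C c f"
  shows "\<exists>m e. e \<in> cAr C \<and> m \<in> cAr C \<and> cDom C e = cDom C f \<and> cCod C e = cDom C m \<and>
     cCod C m = cCod C f \<and> f = cComp C m e \<and> ses C k e \<and> ses C m c"
proof -
  have cf: "c \<in> cAr C" "cDom C c = cCod C f" "zero_arr C (cComp C c f)" using cokernel_facts[OF c] by auto
  have kf: "k \<in> cAr C" "cCod C k = cDom C f" "zero_arr C (cComp C f k)" using kernel_facts[OF k] by auto
  obtain m where m: "is_kernel C m c" using ab_kernel[OF cf(1)] by blast
  have mf: "m \<in> cAr C" "cCod C m = cDom C c" "zero_arr C (cComp C c m)" using kernel_facts[OF m] by auto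
  obtain e where e: "e \<in> cAr C" "cDom C e = cDom C f" "cCod C e = cDom C m" "cComp C m e = f"
    using kernel_univ[OF m f cf(2)[symmetric] cf(3)] by auto
  have epi: "epi C e" using image_epi[OF f c m e(1-3) e(4)[symmetric]] .
  have mono: "mono C m" using kernel_mono[OF m] .
  have c2: "is_cokernel C c m"
    unfolding is_cokernel_def
  proof (intro conjI ballI impI)
    fix x assume x: "x \<in> cAr C" "cDom C x = cCod C m \<and> zero_arr C (cComp C x m)"
    have "cComp C x f = cComp C (cComp C x m) e" using assoc[OF e(1) mf(1) x(1)] e x by simp
    then have "zero_arr C (cComp C x f)" using zero_comp_right[of "cComp C x m" e] x e cs[OF mf(1) x(1)] by simp
    then show "\<exists>!u. u \<in> hom C (cCod C c) (cCod C x) \<and> cComp C u c = x"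
      using cokernel_univ1[OF c x(1)] x mf cf by simp
  qed (use mf cf in auto)
  have k2: "is_kernel C k e"
    unfolding is_kernel_def
  proof (intro conjI ballI impI)
    have "cComp C m (cComp C e k) = cComp C f k" using assoc[OF kf(1) e(1) mf(1)] e kf by simp
    then show ek: "zero_arr C (cComp C e k)"
      using mono_zero[OF mono, of "cComp C e k"] cs[OF kf(1) e(1)] e kf by simp
  next
    fix x assume x: "x \<in> cAr C" "cCod C x = cDom C e \<and> zero_arr C (cComp C e x)"
    have "cComp C f x = cComp C m (cComp C e x)" using assoc[OF x(1) e(1) mf(1)] e x by simp
    then have "zero_arr C (cComp C f x)" using zero_comp_left[of "cComp C e x" m] x e cs[OF x(1) e(1)] mf by simp
    then show "\<exists>!u. u \<in> hom C (cDom C x) (cDom C k) \<and> cComp C k u = x"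
      using kernel_univ1[OF k x(1)] x e by simp
  qed (use kf e in auto)
  have c3: "is_cokernel C e k"
    unfolding is_cokernel_def
  proof (intro conjI ballI impI)
    show "zero_arr C (cComp C e k)" using k2 unfolding is_kernel_def by blast
  next
    fix x assume x: "x \<in> cAr C" "cDom C x = cCod C k \<and> zero_arr C (cComp C x k)"
    obtain g0 where g0: "is_cokernel C e g0" using ab_epi[OF epi] by blast
    have g0f: "g0 \<in> cAr C" "cDom C e = cCod C g0" "zero_arr C (cComp C e g0)" using cokernel_facts[OF g0] by auto
    have "cComp C f g0 = cComp C m (cComp C e g0)" using assoc[OF g0f(1) e(1) mf(1)] e g0f by simp
    then have "zero_arr C (cComp C f g0)" using zero_comp_left[OF g0f(3) mf(1)] e g0f cs[OF g0f(1) e(1)] by simp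
    then obtain t where t: "t \<in> cAr C" "cCod C t = cDom C k" "cComp C k t = g0"
      using kernel_univ[OF k g0f(1)] g0f e by auto
    have "cComp C x g0 = cComp C (cComp C x k) t" using assoc[OF t(1) kf(1) x(1)] t x by simp
    then have "zero_arr C (cComp C x g0)" using zero_comp_right[of "cComp C x k" t] x t cs[OF kf(1) x(1)] by simp
    then show "\<exists>!u. u \<in> hom C (cCod C e) (cCod C x) \<and> cComp C u e = x"
      using cokernel_univ1[OF g0 x(1)] x kf e g0f by simp
  qed (use kf e in auto)
  have "cCod C m = cCod C f" using e cs[OF e(1) mf(1)] by auto
  then show ?thesis using e mf c2 c3 k2 m unfolding ses_def by auto
qed

end

context acat begin

lemma iso_amp:
  assumes amp: "amplitude C \<alpha>" and ph: "\<phi> \<in> cAr C" "\<psi> \<in> cAr C" "cDom C \<phi> = P" "cCod C \<psi> = P"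
    "cCod C \<phi> = Q" "cDom C \<psi> = Q" "cComp C \<psi> \<phi> = cId C P" "cComp C \<phi> \<psi> = cId C Q"
  shows "\<alpha> P \<le> \<alpha> Q"
proof -
  obtain z where z: "zero_obj C z" using zex by blast
  have QO: "Q \<in> cOb C" using ar_cod[OF ph(1)] ph by simp
  have PO: "P \<in> cOb C" using ar_dom[OF ph(1)] ph by simp
  obtain t where t: "t \<in> cAr C" "cDom C t = Q" "cCod C t = z" using to_zero[OF z QO] by blast
  have idz: "cId C z \<in> cAr C" "cDom C (cId C z) = z" "cCod C (cId C z) = z" using id_ar[OF zob[OF z]] by auto
  have tz: "zero_arr C t" using zero_arr_I[OF z t(1) idz(1) t(3) idz(2)] id_l[OF t(1)] t by simp
  have k: "is_kernel C \<phi> t"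
    unfolding is_kernel_def
  proof (intro conjI ballI impI)
    show "zero_arr C (cComp C t \<phi>)" using zero_comp_right[OF tz ph(1)] ph t by simp
  next
    fix x assume x: "x \<in> cAr C" "cCod C x = cDom C t \<and> zero_arr C (cComp C t x)"
    have u: "cComp C \<psi> x \<in> hom C (cDom C x) (cDom C \<phi>)" "cComp C \<phi> (cComp C \<psi> x) = x"
      using cs[OF x(1) ph(2)] x t ph assoc[OF x(1) ph(2) ph(1)] id_l[OF x(1)] unfolding hom_def by auto
    show "\<exists>!u. u \<in> hom C (cDom C x) (cDom C \<phi>) \<and> cComp C \<phi> u = x"
    proof (rule ex1I[of _ "cComp C \<psi> x"])
      fix u assume uu: "u \<in> hom C (cDom C x) (cDom C \<phi>) \<and> cComp C \<phi> u = x"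
      then have ua: "u \<in> cAr C" "cCod C u = P" unfolding hom_def using ph by auto
      have "u = cComp C (cComp C \<psi> \<phi>) u" using id_l[OF ua(1)] ua ph by simp
      also have "\<dots> = cComp C \<psi> x" using assoc[OF ua(1) ph(1) ph(2)] ua ph uu by simp
      finally show "u = cComp C \<psi> x" .
    qed (use u in auto)
  qed (use ph t in auto)
  have c: "is_cokernel C t \<phi>"
    unfolding is_cokernel_def
  proof (intro conjI ballI impI)
    show "zero_arr C (cComp C t \<phi>)" using zero_comp_right[OF tz ph(1)] ph t by simp
  next
    fix x assume x: "x \<in> cAr C" "cDom C x = cCod C \<phi> \<and> zero_arr C (cComp C x \<phi>)"
    have x1: "cDom C x = Q" "zero_arr C (cComp C x \<phi>)" using x ph by auto
    have "x = cComp C x (cId C Q)" using id_r[OF x(1)] x1 by simp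
    also have "\<dots> = cComp C x (cComp C \<phi> \<psi>)" using ph by simp
    also have "\<dots> = cComp C (cComp C x \<phi>) \<psi>" using assoc[OF ph(2) ph(1) x(1)] x1 ph by simp
    finally have xe: "x = cComp C (cComp C x \<phi>) \<psi>" .
    have cx: "cDom C (cComp C x \<phi>) = P" using comp_dom[OF ph(1) x(1)] x1 ph by simp
    have xz: "zero_arr C x" using zero_comp_right[OF x1(2) ph(2)] cx ph xe by simp
    have XO: "cCod C x \<in> cOb C" using ar_cod[OF x(1)] .
    obtain u where u: "u \<in> cAr C" "cDom C u = z" "cCod C u = cCod C x" using from_zero[OF z XO] by blast
    have uz: "zero_arr C (cComp C u t)" using zero_comp_left[OF tz u(1)] t u by simp
    have ut: "cComp C u t = x"
      by (rule zero_arr_eq[OF uz xz]) (use comp_dom[OF t(1) u(1)] comp_cod[OF t(1) u(1)] t u x1 in simp_all)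
    show "\<exists>!u. u \<in> hom C (cCod C t) (cCod C x) \<and> cComp C u t = x"
    proof (rule ex1I[of _ u])
      show "u \<in> hom C (cCod C t) (cCod C x) \<and> cComp C u t = x" using u ut t unfolding hom_def by simp
    next
      fix u' assume "u' \<in> hom C (cCod C t) (cCod C x) \<and> cComp C u' t = x"
      then have u': "u' \<in> cAr C" "cDom C u' = z" "cCod C u' = cCod C x" unfolding hom_def using t by auto
      show "u' = u" using from_zero_uniq[OF z u'(1) u(1)] u' u by simp
    qed
  qed (use ph t in auto)
  have "ses C \<phi> t" using k c unfolding ses_def by simp
  then have "\<alpha> (cDom C \<phi>) \<le> \<alpha> (cDom C t)" using amp unfolding amplitude_def by blast
  then show ?thesis using ph t by simp
qed

lemma kernel_amp:
  assumes amp: "amplitude C \<alpha>" and k1: "is_kernel C k1 f" and k2: "is_kernel C k2 f"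
  shows "\<alpha> (cDom C k1) \<le> \<alpha> (cDom C k2)"
proof -
  have a1: "k1 \<in> cAr C" "cCod C k1 = cDom C f" "zero_arr C (cComp C f k1)" using kernel_facts[OF k1] by auto
  have a2: "k2 \<in> cAr C" "cCod C k2 = cDom C f" "zero_arr C (cComp C f k2)" using kernel_facts[OF k2] by auto
  obtain u where u: "u \<in> cAr C" "cDom C u = cDom C k1" "cCod C u = cDom C k2" "cComp C k2 u = k1"
    using kernel_univ[OF k2 a1(1) a1(2) a1(3)] by auto
  obtain v where v: "v \<in> cAr C" "cDom C v = cDom C k2" "cCod C v = cDom C k1" "cComp C k1 v = k2"
    using kernel_univ[OF k1 a2(1) a2(2) a2(3)] by auto
  have O1: "cDom C k1 \<in> cOb C" and O2: "cDom C k2 \<in> cOb C" using ar_dom a1 a2 by auto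
  have "cComp C k2 (cComp C u v) = cComp C k2 (cId C (cDom C k2))"
    using assoc[OF v(1) u(1) a2(1)] u v id_r[OF a2(1)] by simp
  then have uv: "cComp C u v = cId C (cDom C k2)"
    using mono_cancel[OF kernel_mono[OF k2], of "cComp C u v" "cId C (cDom C k2)"] cs[OF v(1) u(1)] u v id_ar[OF O2]
    by simp
  have "cComp C k1 (cComp C v u) = cComp C k1 (cId C (cDom C k1))"
    using assoc[OF u(1) v(1) a1(1)] u v id_r[OF a1(1)] by simp
  then have vu: "cComp C v u = cId C (cDom C k1)"
    using mono_cancel[OF kernel_mono[OF k1], of "cComp C v u" "cId C (cDom C k1)"] cs[OF u(1) v(1)] u v id_ar[OF O1]
    by simp
  show ?thesis using iso_amp[OF amp u(1) v(1) u(2) v(3) u(3) v(2) vu uv] .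
qed

lemma cokernel_amp:
  assumes amp: "amplitude C \<alpha>" and k1: "is_cokernel C k1 f" and k2: "is_cokernel C k2 f"
  shows "\<alpha> (cCod C k1) \<le> \<alpha> (cCod C k2)"
proof -
  have a1: "k1 \<in> cAr C" "cDom C k1 = cCod C f" "zero_arr C (cComp C k1 f)" using cokernel_facts[OF k1] by auto
  have a2: "k2 \<in> cAr C" "cDom C k2 = cCod C f" "zero_arr C (cComp C k2 f)" using cokernel_facts[OF k2] by auto
  obtain u where u: "u \<in> cAr C" "cDom C u = cCod C k1" "cCod C u = cCod C k2" "cComp C u k1 = k2"
    using cokernel_univ[OF k1 a2(1) a2(2) a2(3)] by auto
  obtain v where v: "v \<in> cAr C" "cDom C v = cCod C k2" "cCod C v = cCod C k1" "cComp C v k2 = k1"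
    using cokernel_univ[OF k2 a1(1) a1(2) a1(3)] by auto
  have O1: "cCod C k1 \<in> cOb C" and O2: "cCod C k2 \<in> cOb C" using ar_cod a1 a2 by auto
  have "cComp C (cComp C u v) k2 = cComp C (cId C (cCod C k2)) k2"
    using assoc[OF a2(1) v(1) u(1)] u v id_l[OF a2(1)] by simp
  then have uv: "cComp C u v = cId C (cCod C k2)"
    using epi_cancel[OF cokernel_epi[OF k2], of "cComp C u v" "cId C (cCod C k2)"] cs[OF v(1) u(1)] u v id_ar[OF O2]
    by simp
  have "cComp C (cComp C v u) k1 = cComp C (cId C (cCod C k1)) k1"
    using assoc[OF a1(1) u(1) v(1)] u v id_l[OF a1(1)] by simp
  then have vu: "cComp C v u = cId C (cCod C k1)"
    using epi_cancel[OF cokernel_epi[OF k1], of "cComp C v u" "cId C (cCod C k1)"] cs[OF u(1) v(1)] u v id_ar[OF O1]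
    by simp
  show ?thesis using iso_amp[OF amp u(1) v(1) u(2) v(3) u(3) v(2) vu uv] .
qed

end

lemma fun_ar: "is_functor C D Fo Fm \<Longrightarrow> f \<in> cAr C \<Longrightarrow>
   Fm f \<in> cAr D \<and> cDom D (Fm f) = Fo (cDom C f) \<and> cCod D (Fm f) = Fo (cCod C f)"
  unfolding is_functor_def hom_def by blast

lemma fun_comp: "is_functor C D Fo Fm \<Longrightarrow> f \<in> cAr C \<Longrightarrow> g \<in> cAr C \<Longrightarrow> cCod C f = cDom C g \<Longrightarrow>
   Fm (cComp C g f) = cComp D (Fm g) (Fm f)"
  unfolding is_functor_def by blast

lemma arrow_bound:
  assumes aC: "abelian C" and aD: "abelian D" and amC: "amplitude C \<alpha>" and amD: "amplitude D \<alpha>'"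
    and F: "exact_functor C D Fo Fm"
    and Kb: "\<forall>X\<in>cOb C. \<alpha>' (Fo X) \<le> ennreal K * \<alpha> X"
    and f: "f \<in> cAr C"
  shows "arr_cost D \<alpha>' (Fm f) \<le> ennreal K * arr_cost C \<alpha> f"
proof -
  interpret C: acat C by (unfold_locales) (rule aC)
  interpret D: acat D by (unfold_locales) (rule aD)
  have Ff: "is_functor C D Fo Fm" using F unfolding exact_functor_def by blast
  have Fses: "\<And>a b. ses C a b \<Longrightarrow> ses D (Fm a) (Fm b)" using F unfolding exact_functor_def by blast
  define k where "k = (SOME k. is_kernel C k f)"
  define c where "c = (SOME c. is_cokernel C c f)"
  have k: "is_kernel C k f" unfolding k_def using C.ab_kernel[OF f] by (rule someI_ex)
  have c: "is_cokernel C c f" unfolding c_def using C.ab_cokernel[OF f] by (rule someI_ex)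
  obtain m e where me: "e \<in> cAr C" "m \<in> cAr C" "cDom C e = cDom C f" "cCod C e = cDom C m"
     "cCod C m = cCod C f" "f = cComp C m e" "ses C k e" "ses C m c"
    using C.factor[OF f k c] by blast
  have kf: "k \<in> cAr C" "cCod C k = cDom C f" using C.kernel_facts[OF k] by auto
  have cf: "c \<in> cAr C" "cDom C c = cCod C f" using C.cokernel_facts[OF c] by auto
  have s1: "ses D (Fm k) (Fm e)" and s2: "ses D (Fm m) (Fm c)" using Fses me by auto
  have Fke: "is_kernel D (Fm k) (Fm e)" "is_cokernel D (Fm e) (Fm k)" using s1 unfolding ses_def by auto
  have Fmc: "is_kernel D (Fm m) (Fm c)" "is_cokernel D (Fm c) (Fm m)" using s2 unfolding ses_def by auto
  have Ffme: "Fm f = cComp D (Fm m) (Fm e)" using fun_comp[OF Ff me(1) me(2) me(4)] me(6) by simp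
  have Fe: "Fm e \<in> cAr D" "cDom D (Fm e) = Fo (cDom C f)" "cCod D (Fm e) = Fo (cDom C m)"
    using fun_ar[OF Ff me(1)] me by auto
  have Fm: "Fm m \<in> cAr D" "cDom D (Fm m) = Fo (cDom C m)" "cCod D (Fm m) = Fo (cCod C f)"
    using fun_ar[OF Ff me(2)] me by auto
  have Fk: "Fm k \<in> cAr D" "cDom D (Fm k) = Fo (cDom C k)" "cCod D (Fm k) = Fo (cDom C f)"
    using fun_ar[OF Ff kf(1)] kf by auto
  have Fc: "Fm c \<in> cAr D" "cDom D (Fm c) = Fo (cCod C f)" "cCod D (Fm c) = Fo (cCod C c)"
    using fun_ar[OF Ff cf(1)] cf by auto
  have Ffa: "Fm f \<in> cAr D" "cDom D (Fm f) = Fo (cDom C f)" "cCod D (Fm f) = Fo (cCod C f)"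
    using fun_ar[OF Ff f] by auto
  have monoFm: "mono D (Fm m)" using D.kernel_mono[OF Fmc(1)] .
  have epiFe: "epi D (Fm e)" using D.cokernel_epi[OF Fke(2)] .
  have K1: "is_kernel D (Fm k) (Fm f)"
    unfolding is_kernel_def
  proof (intro conjI ballI impI)
    have z: "zero_arr D (cComp D (Fm e) (Fm k))" using D.kernel_facts[OF Fke(1)] by blast
    have "cComp D (Fm f) (Fm k) = cComp D (Fm m) (cComp D (Fm e) (Fm k))"
      using Ffme D.assoc[OF Fk(1) Fe(1) Fm(1)] Fk Fe Fm by simp
    then show "zero_arr D (cComp D (Fm f) (Fm k))"
      using D.zero_comp_left[OF z Fm(1)] D.comp_cod[OF Fk(1) Fe(1)] Fk Fe Fm by simp
  next
    fix x assume x: "x \<in> cAr D" "cCod D x = cDom D (Fm f) \<and> zero_arr D (cComp D (Fm f) x)"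
    have "cComp D (Fm f) x = cComp D (Fm m) (cComp D (Fm e) x)"
      using Ffme D.assoc[OF x(1) Fe(1) Fm(1)] x Ffa Fe Fm by simp
    then have "zero_arr D (cComp D (Fm e) x)"
      using D.mono_zero[OF monoFm, of "cComp D (Fm e) x"] D.cs[OF x(1) Fe(1)] x Ffa Fe Fm by simp
    then show "\<exists>!u. u \<in> hom D (cDom D x) (cDom D (Fm k)) \<and> cComp D (Fm k) u = x"
      using D.kernel_univ1[OF Fke(1) x(1)] x Ffa Fe by simp
  qed (use Fk Ffa in auto)
  have C1: "is_cokernel D (Fm c) (Fm f)"
    unfolding is_cokernel_def
  proof (intro conjI ballI impI)
    have z: "zero_arr D (cComp D (Fm c) (Fm m))" using D.cokernel_facts[OF Fmc(2)] by blast
    have "cComp D (Fm c) (Fm f) = cComp D (cComp D (Fm c) (Fm m)) (Fm e)"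
      using Ffme D.assoc[OF Fe(1) Fm(1) Fc(1)] Fc Fe Fm by simp
    then show "zero_arr D (cComp D (Fm c) (Fm f))"
      using D.zero_comp_right[OF z Fe(1)] D.comp_dom[OF Fm(1) Fc(1)] Fc Fe Fm by simp
  next
    fix x assume x: "x \<in> cAr D" "cDom D x = cCod D (Fm f) \<and> zero_arr D (cComp D x (Fm f))"
    have "cComp D x (Fm f) = cComp D (cComp D x (Fm m)) (Fm e)"
      using Ffme D.assoc[OF Fe(1) Fm(1) x(1)] x Ffa Fe Fm by simp
    then have "zero_arr D (cComp D x (Fm m))"
      using D.epi_zero[OF epiFe, of "cComp D x (Fm m)"] D.cs[OF Fm(1) x(1)] x Ffa Fe Fm by simp
    then show "\<exists>!u. u \<in> hom D (cCod D (Fm c)) (cCod D x) \<and> cComp D u (Fm c) = x"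
      using D.cokernel_univ1[OF Fmc(2) x(1)] x Ffa Fm by simp
  qed (use Fc Ffa in auto)
  define k' where "k' = (SOME k. is_kernel D k (Fm f))"
  define c' where "c' = (SOME c. is_cokernel D c (Fm f))"
  have k': "is_kernel D k' (Fm f)" unfolding k'_def using D.ab_kernel[OF Ffa(1)] by (rule someI_ex)
  have c': "is_cokernel D c' (Fm f)" unfolding c'_def using D.ab_cokernel[OF Ffa(1)] by (rule someI_ex)
  have b1: "\<alpha>' (cDom D k') \<le> ennreal K * \<alpha> (cDom C k)"
  proof -
    have "\<alpha>' (cDom D k') \<le> \<alpha>' (cDom D (Fm k))" using D.kernel_amp[OF amD k' K1] .
    also have "\<dots> \<le> ennreal K * \<alpha> (cDom C k)" using Kb C.ar_dom[OF kf(1)] Fk by simp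
    finally show ?thesis .
  qed
  have b2: "\<alpha>' (cCod D c') \<le> ennreal K * \<alpha> (cCod C c)"
  proof -
    have "\<alpha>' (cCod D c') \<le> \<alpha>' (cCod D (Fm c))" using D.cokernel_amp[OF amD c' C1] .
    also have "\<dots> \<le> ennreal K * \<alpha> (cCod C c)" using Kb C.ar_cod[OF cf(1)] Fc by simp
    finally show ?thesis .
  qed
  have "arr_cost D \<alpha>' (Fm f) = \<alpha>' (cDom D k') + \<alpha>' (cCod D c')"
    unfolding arr_cost_def k'_def c'_def by simp
  also have "\<dots> \<le> ennreal K * \<alpha> (cDom C k) + ennreal K * \<alpha> (cCod C c)"
    using b1 b2 by (rule add_mono)
  also have "\<dots> = ennreal K * arr_cost C \<alpha> f"
    unfolding arr_cost_def k_def c_def by (simp add: distrib_left)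
  finally show ?thesis .
qed


lemma ennreal_le_mult_Inf:
  fixes x :: ennreal
  assumes K: "(0::real) < K" and h: "\<And>s. s \<in> S \<Longrightarrow> x \<le> ennreal K * s"
  shows "x \<le> ennreal K * Inf S"
proof -
  let ?k = "ennreal K"
  have k0: "?k \<noteq> 0" using K by simp
  have kt: "?k \<noteq> top" by simp
  have "x / ?k \<le> Inf S"
  proof (rule Inf_greatest)
    fix s assume "s \<in> S"
    then have "x / ?k \<le> (?k * s) / ?k" using h divide_right_mono_ennreal by blast
    also have "\<dots> = s" using mult_divide_eq_ennreal[OF k0 kt, of s] by (simp add: mult.commute)
    finally show "x / ?k \<le> s" .
  qed
  then have "?k * (x / ?k) \<le> ?k * Inf S" by (rule mult_left_mono) simp
  moreover have "?k * (x / ?k) = x"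
    using ennreal_divide_times[of x ?k ?k] ennreal_divide_self[OF k0] kt
    by (simp add: mult.commute top.not_eq_extremum)
  ultimately show ?thesis by simp
qed

lemma zigzag_map:
  assumes F: "is_functor C D Fo Fm" and z: "is_zigzag C A B xs gs"
  shows "is_zigzag D (Fo A) (Fo B) (map Fo xs) (map Fm gs)"
  unfolding is_zigzag_def
proof (intro conjI allI impI)
  have l: "length xs = Suc (length gs)" "xs ! 0 = A" "xs ! length gs = B"
    using z unfolding is_zigzag_def by auto
  show "length (map Fo xs) = Suc (length (map Fm gs))" using l by simp
  show "map Fo xs ! 0 = Fo A" using l by simp
  show "map Fo xs ! length (map Fm gs) = Fo B" using l by simp
  fix i assume i: "i < length (map Fm gs)"
  have g: "gs ! i \<in> cAr C" "(cDom C (gs ! i) = xs ! i \<and> cCod C (gs ! i) = xs ! Suc i) \<or>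
         (cDom C (gs ! i) = xs ! Suc i \<and> cCod C (gs ! i) = xs ! i)"
    using z i unfolding is_zigzag_def by auto
  have fa: "Fm (gs ! i) \<in> cAr D" "cDom D (Fm (gs ! i)) = Fo (cDom C (gs ! i))" "cCod D (Fm (gs ! i)) = Fo (cCod C (gs ! i))"
    using fun_ar[OF F g(1)] by auto
  show "map Fm gs ! i \<in> cAr D" using fa i by simp
  show "cDom D (map Fm gs ! i) = map Fo xs ! i \<and> cCod D (map Fm gs ! i) = map Fo xs ! Suc i \<or>
        cDom D (map Fm gs ! i) = map Fo xs ! Suc i \<and> cCod D (map Fm gs ! i) = map Fo xs ! i"
    using g(2) fa i l by auto
qed

lemma sum_bound:
  assumes b: "\<And>g. g \<in> cAr C \<Longrightarrow> arr_cost D \<alpha>' (Fm g) \<le> ennreal K * arr_cost C \<alpha> g"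
  shows "(\<forall>g\<in>set gs. g \<in> cAr C) \<Longrightarrow>
    sum_list (map (arr_cost D \<alpha>') (map Fm gs)) \<le> ennreal K * sum_list (map (arr_cost C \<alpha>) gs)"
proof (induction gs)
  case Nil
  then show ?case by simp
next
  case (Cons a gs)
  then have "sum_list (map (arr_cost D \<alpha>') (map Fm (a # gs))) \<le>
     ennreal K * arr_cost C \<alpha> a + ennreal K * sum_list (map (arr_cost C \<alpha>) gs)"
    using b by (simp add: add_mono)
  then show ?case by (simp add: distrib_left)
qed

theorem mainTheorem10:
  fixes C :: "('o,'m) cat" and D :: "('p,'n) cat"
    and \<alpha> :: "'o \<Rightarrow> ennreal" and \<alpha>' :: "'p \<Rightarrow> ennreal"
    and Fo :: "'o \<Rightarrow> 'p" and Fm :: "'m \<Rightarrow> 'n" and K :: real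
  assumes "abelian C" and "abelian D"
    and "amplitude C \<alpha>" and "amplitude D \<alpha>'"
    and "exact_functor C D Fo Fm"
    and "K \<ge> 0"
    and "\<forall>X\<in>cOb C. \<alpha>' (Fo X) \<le> ennreal K * \<alpha> X"
    and "A \<in> cOb C" and "B \<in> cOb C"
  shows "path_dist D \<alpha>' (Fo A) (Fo B) \<le> ennreal K * path_dist C \<alpha> A B"
proof -
  interpret C: acat C by (unfold_locales) (rule assms(1))
  have Ff: "is_functor C D Fo Fm" using assms(5) unfolding exact_functor_def by blast
  have ab: "\<And>g. g \<in> cAr C \<Longrightarrow> arr_cost D \<alpha>' (Fm g) \<le> ennreal K * arr_cost C \<alpha> g"
    using arrow_bound[OF assms(1-5) assms(7)] by blast
  let ?S = "{gs. \<exists>xs. is_zigzag C A B xs gs}"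
  have each: "path_dist D \<alpha>' (Fo A) (Fo B) \<le> ennreal K * sum_list (map (arr_cost C \<alpha>) gs)"
    if gs: "gs \<in> ?S" for gs
  proof -
    obtain xs where xs: "is_zigzag C A B xs gs" using gs by blast
    have inar: "\<forall>g\<in>set gs. g \<in> cAr C"
      using xs unfolding is_zigzag_def by (auto simp: in_set_conv_nth)
    have "map Fm gs \<in> {gs. \<exists>xs. is_zigzag D (Fo A) (Fo B) xs gs}"
      using zigzag_map[OF Ff xs] by blast
    then have "path_dist D \<alpha>' (Fo A) (Fo B) \<le> sum_list (map (arr_cost D \<alpha>') (map Fm gs))"
      unfolding path_dist_def by (rule INF_lower)
    also have "\<dots> \<le> ennreal K * sum_list (map (arr_cost C \<alpha>) gs)"
      using sum_bound[OF ab inar] .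
    finally show ?thesis .
  qed
  show ?thesis
  proof (cases "K = 0")
    case True
    obtain z where z: "zero_obj C z" using C.zex by blast
    obtain a where a: "a \<in> cAr C" "cDom C a = A" "cCod C a = z" using C.to_zero[OF z assms(8)] by blast
    obtain b where b: "b \<in> cAr C" "cDom C b = B" "cCod C b = z" using C.to_zero[OF z assms(9)] by blast
    have "is_zigzag C A B [A, z, B] [a, b]"
      unfolding is_zigzag_def using a b by (auto simp: less_Suc_eq)
    then have "[a, b] \<in> ?S" by blast
    then have "path_dist D \<alpha>' (Fo A) (Fo B) \<le> 0" using each True by fastforce
    then show ?thesis by simp
  next
    case False
    then have Kp: "0 < K" using assms(6) by simp
    show ?thesis
      unfolding path_dist_def[of C]
      by (rule ennreal_le_mult_Inf[OF Kp]) (use each in auto)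
  qed
qed

end
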